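(* Let $\mathbf{P}=\{p_n(x)\}_{n\ge0}$ be a sequence of complex polynomials with $\deg p_n=n$, $p_0=1$, and let $\bar{\mathbf{P}}=\{\bar p_n(x)\}$ with $\bar p_0(x)=1$, $\bar p_n(x)=xp_{n-1}(x)$ for $n\ge1$. Then for $n\ge2$ and $1\le k\le n-1$, $$A_{n,k}(\bar{\mathbf{P}})=(k+1)A_{n-1,k}(\mathbf{P})+(n-k)A_{n-1,k-1}(\mathbf{P}),$$ and for $n\ge1$, $A_{n,0}(\bar{\mathbf{P}})=\bar p_n(1)=A_{n-1,0}(\mathbf{P})=p_{n-1}(1)$.
   Context: For any sequence $\mathbf{Q}=\{q_n\}$ with $\deg q_n=n$, $q_0=1$, the Eulerian numbers $A_{n,k}(\mathbf{Q})$ ($0\le k\le n$) are the unique coefficients with $q_n(x)=\sum_{k=0}^{n}A_{n,k}(\mathbf{Q})\binom{x+n-k-1}{n}$, where $\binom{y}{n}=y(y-1)\cdots(y-n+1)/n!$. *)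

theory Defs
  imports "HOL-Computational_Algebra.Polynomial"
begin

definition binom_poly :: "complex \<Rightarrow> nat \<Rightarrow> complex poly" where
  "binom_poly c n = smult (1 / of_nat (fact n)) (\<Prod>i<n. [:c - of_nat i, 1:])"

definition eulerian_num :: "(nat \<Rightarrow> complex poly) \<Rightarrow> nat \<Rightarrow> nat \<Rightarrow> complex" where
  "eulerian_num Q n k =
     (THE a :: nat \<Rightarrow> complex. (\<forall>j>n. a j = 0) \<and>
        Q n = (\<Sum>j\<le>n. smult (a j) (binom_poly (of_nat n - of_nat j - 1) n))) k"

definition bar_seq :: "(nat \<Rightarrow> complex poly) \<Rightarrow> nat \<Rightarrow> complex poly" where
  "bar_seq P n = (if n = 0 then 1 else [:0, 1:] * P (n - 1))"

end

theory Submission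
  imports Defs
begin

definition BB :: "nat \<Rightarrow> nat \<Rightarrow> complex poly" where
  "BB n j = binom_poly (of_nat n - of_nat j - 1) n"

definition SS :: "nat \<Rightarrow> (nat \<Rightarrow> complex) \<Rightarrow> complex poly" where
  "SS n a = (\<Sum>j\<le>n. smult (a j) (BB n j))"

lemma BB_zero:
  assumes "t < j" "j \<le> n"
  shows "poly (BB n j) (of_nat (Suc t)) = 0"
proof -
  define i0 where "i0 = n + t - j"
  have i0: "i0 < n" using assms unfolding i0_def by auto
  have "of_nat i0 = (of_nat n + of_nat t - of_nat j :: complex)"
    using assms unfolding i0_def by (simp add: of_nat_diff)
  hence "poly [:of_nat n - of_nat j - 1 - of_nat i0, 1:] (of_nat (Suc t)) = (0::complex)"
    by simp
  hence "(\<Prod>i<n. poly [:of_nat n - of_nat j - 1 - of_nat i, 1:] (of_nat (Suc t))) = (0::complex)"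
    using i0 by (intro prod_zero) auto
  thus ?thesis unfolding BB_def binom_poly_def by (simp add: poly_prod)
qed

lemma BB_one:
  shows "poly (BB n t) (of_nat (Suc t)) = 1"
proof -
  have "(\<Prod>i<n. poly [:of_nat n - of_nat t - 1 - of_nat i, 1:] (of_nat (Suc t)))
      = (\<Prod>i<n. (of_nat (n - i) :: complex))"
    by (intro prod.cong) (auto simp: of_nat_diff)
  also have "\<dots> = fact n" unfolding fact_prod_rev
    by (simp add: atLeast0LessThan)
  finally show ?thesis unfolding BB_def binom_poly_def by (simp add: poly_prod)
qed

lemma BB_zero' [simp]:
  "t < j \<Longrightarrow> j \<le> n \<Longrightarrow> poly (BB n j) (1 + of_nat t) = 0"
  using BB_zero[of t j n] by simp

lemma BB_one' [simp]: "poly (BB n t) (1 + of_nat t) = 1"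
  using BB_one[of n t] by simp

lemma degree_BB: "degree (BB n j) \<le> n"
proof -
  have "degree (\<Prod>i<n. [:of_nat n - of_nat j - 1 - of_nat i, 1:] :: complex poly)
        \<le> (\<Sum>i<n. degree ([:of_nat n - of_nat j - 1 - of_nat i, 1:] :: complex poly))"
    using degree_prod_sum_le[of "{..<n}" "\<lambda>i. [:of_nat n - of_nat j - 1 - of_nat i, 1:] :: complex poly"]
    by (simp add: o_def)
  also have "\<dots> = n" by simp
  finally show ?thesis unfolding BB_def binom_poly_def
    using degree_smult_le order_trans by blast
qed

lemma degree_SS: "degree (SS n a) \<le> n"
  unfolding SS_def
  by (rule degree_sum_le) (simp, meson degree_BB degree_smult_le order_trans)

lemma SS_eval_lower:
  assumes "\<forall>j<t. a j = 0" "t \<le> n"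
  shows "poly (SS n a) (of_nat (Suc t)) = a t"
proof -
  have "poly (SS n a) (of_nat (Suc t)) = (\<Sum>j\<le>n. a j * poly (BB n j) (of_nat (Suc t)))"
    unfolding SS_def by (simp add: poly_sum)
  also have "\<dots> = (\<Sum>j\<in>{t}. a j * poly (BB n j) (of_nat (Suc t)))"
    using assms by (intro sum.mono_neutral_right) (auto, metis BB_zero' linorder_neqE_nat)
  also have "\<dots> = a t" by (simp add: BB_one)
  finally show ?thesis .
qed

lemma SS_unique0:
  assumes "SS n d = 0"
  shows "\<forall>j\<le>n. d j = 0"
proof -
  have "\<forall>j<t. d j = 0" if "t \<le> Suc n" for t
    using that
  proof (induction t)
    case 0 then show ?case by simp
  next
    case (Suc t)
    hence ih: "\<forall>j<t. d j = 0" by simp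
    have "d t = poly (SS n d) (of_nat (Suc t))"
      using SS_eval_lower[OF ih] Suc.prems by simp
    hence "d t = 0" using assms by simp
    with ih show ?case using less_Suc_eq by auto
  qed
  thus ?thesis by auto
qed

lemma SS_diff: "SS n a - SS n b = SS n (\<lambda>j. a j - b j)"
  unfolding SS_def by (simp add: sum_subtractf[symmetric] smult_diff_left)

lemma SS_unique:
  assumes "\<forall>j>n. a j = 0" "\<forall>j>n. b j = 0" "SS n a = SS n b"
  shows "a = b"
proof
  fix j
  have "\<forall>j\<le>n. a j - b j = 0" using SS_unique0[of n "\<lambda>j. a j - b j"] assms(3)
    by (simp add: SS_diff[symmetric])
  thus "a j = b j" using assms(1,2) by (cases "j \<le> n") auto
qed

lemma SS_exists:
  fixes Q :: "complex poly"
  assumes "degree Q \<le> n"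
  shows "\<exists>a. (\<forall>j>n. a j = 0) \<and> Q = SS n a"
proof -
  have "\<exists>a. (\<forall>j\<ge>t. a j = 0) \<and> (\<forall>s<t. poly (SS n a) (of_nat (Suc s)) = poly Q (of_nat (Suc s)))"
    if "t \<le> Suc n" for t
    using that
  proof (induction t)
    case 0 then show ?case by (intro exI[of _ "\<lambda>_. 0"]) auto
  next
    case (Suc t)
    then obtain a where a1: "\<forall>j\<ge>t. a j = 0"
      and a2: "\<forall>s<t. poly (SS n a) (of_nat (Suc s)) = poly Q (of_nat (Suc s))" by auto
    define \<delta> where "\<delta> = poly Q (of_nat (Suc t)) - poly (SS n a) (of_nat (Suc t))"
    define a' where "a' = a(t := \<delta>)"
    have tn: "t \<le> n" using Suc.prems by simp
    have "SS n a' - SS n a = SS n (\<lambda>j. a' j - a j)" by (rule SS_diff)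
    also have "\<dots> = (\<Sum>j\<in>{t}. smult (a' j - a j) (BB n j))"
      unfolding SS_def using tn by (intro sum.mono_neutral_right) (auto simp: a'_def)
    also have "\<dots> = smult \<delta> (BB n t)" using a1 by (simp add: a'_def)
    finally have eq: "SS n a' = SS n a + smult \<delta> (BB n t)" by (simp add: algebra_simps)
    show ?case
    proof (intro exI[of _ a'] conjI allI impI)
      fix j assume "Suc t \<le> j" thus "a' j = 0" using a1 by (simp add: a'_def)
    next
      fix s assume s: "s < Suc t"
      show "poly (SS n a') (of_nat (Suc s)) = poly Q (of_nat (Suc s))"
      proof (cases "s = t")
        case True thus ?thesis by (simp add: eq BB_one \<delta>_def)
      next
        case False
        hence "s < t" using s by simp
        thus ?thesis using a2 tn by (simp add: eq BB_zero)
      qed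
    qed
  qed
  from this[of "Suc n"] obtain a where a1: "\<forall>j\<ge>Suc n. a j = 0"
    and a2: "\<forall>s<Suc n. poly (SS n a) (of_nat (Suc s)) = poly Q (of_nat (Suc s))" by auto
  have "SS n a = Q"
  proof (rule poly_eqI_degree[of "(\<lambda>s. of_nat (Suc s)) ` {..<Suc n}"])
    show "\<And>x. x \<in> (\<lambda>s. of_nat (Suc s)) ` {..<Suc n} \<Longrightarrow> poly (SS n a) x = poly Q x"
      using a2 by auto
    have "card ((\<lambda>s. of_nat (Suc s) :: complex) ` {..<Suc n}) = Suc n"
      by (subst card_image) (auto simp: inj_on_def)
    thus "degree (SS n a) < card ((\<lambda>s. of_nat (Suc s) :: complex) ` {..<Suc n})"
      "degree Q < card ((\<lambda>s. of_nat (Suc s) :: complex) ` {..<Suc n})"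
      using degree_SS[of n a] assms by auto
  qed
  thus ?thesis using a1 by (intro exI[of _ a]) auto
qed

lemma eulerian_eq:
  assumes "\<forall>j>n. a j = 0" "Q n = SS n a"
  shows "eulerian_num Q n = a"
proof -
  have "(THE a :: nat \<Rightarrow> complex. (\<forall>j>n. a j = 0) \<and> Q n = SS n a) = a"
    using assms by (intro the_equality) (auto intro: SS_unique)
  thus ?thesis unfolding eulerian_num_def SS_def BB_def by simp
qed

lemma eulerian_spec:
  assumes "degree (Q n) \<le> n"
  shows "(\<forall>j>n. eulerian_num Q n j = 0) \<and> Q n = SS n (eulerian_num Q n)"
proof -
  obtain a where "\<forall>j>n. a j = 0" "Q n = SS n a" using SS_exists[of "Q n" n] assms by auto
  thus ?thesis using eulerian_eq[of n a Q] by simp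
qed

lemma eulerian_0:
  assumes "degree (Q n) \<le> n"
  shows "eulerian_num Q n 0 = poly (Q n) 1"
proof -
  have "poly (Q n) (of_nat (Suc 0)) = eulerian_num Q n 0"
    using eulerian_spec[of Q n] assms SS_eval_lower[of 0 "eulerian_num Q n" n] by simp
  thus ?thesis by simp
qed

lemma x_BB:
  assumes "j \<le> m"
  shows "[:0,1:] * BB m j = smult (of_nat j + 1) (BB (Suc m) j) + smult (of_nat (m - j)) (BB (Suc m) (Suc j))"
proof -
  define c :: complex where "c = of_nat m - of_nat j - 1"
  define Pm where "Pm = (\<Prod>i<m. [:c - of_nat i, 1:])"
  have F: "fact (Suc m) = (of_nat m + 1) * (fact m :: complex)" by (simp add: algebra_simps)
  have b1: "BB m j = smult (1 / fact m) Pm" unfolding BB_def binom_poly_def Pm_def c_def by simp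
  have "(\<Prod>i<Suc m. [:c + 1 - of_nat i, 1:]) = [:c+1,1:] * Pm"
    unfolding Pm_def by (subst prod.lessThan_Suc_shift) (simp add: algebra_simps)
  hence b2: "BB (Suc m) j = smult (1 / fact (Suc m)) ([:c+1,1:] * Pm)"
    unfolding BB_def binom_poly_def c_def by (simp add: algebra_simps)
  have "BB (Suc m) (Suc j) = smult (1 / fact (Suc m)) (Pm * [:c - of_nat m,1:])"
    unfolding BB_def binom_poly_def Pm_def c_def by (simp add: algebra_simps)
  note b3 = this
  have "poly ([:0,1:] * BB m j) x
     = poly (smult (of_nat j + 1) (BB (Suc m) j) + smult (of_nat (m - j)) (BB (Suc m) (Suc j))) x" for x
  proof -
    define p where "p = poly Pm x"
    define f :: complex where "f = fact m"
    have f0: "f \<noteq> 0" unfolding f_def by simp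
    have m1: "(of_nat m + 1 :: complex) \<noteq> 0"
      using of_nat_neq_0[of m, where ?'a=complex] by (simp add: add.commute)
    have ks: "(of_nat j + 1) * (c + 1 + x) + of_nat (m - j) * (c - of_nat m + x) = (of_nat m + 1) * x"
      using assms by (simp add: c_def of_nat_diff algebra_simps)
    have "poly (smult (of_nat j + 1) (BB (Suc m) j) + smult (of_nat (m - j)) (BB (Suc m) (Suc j))) x
       = p / ((of_nat m + 1) * f) * ((of_nat j + 1) * (c + 1 + x) + of_nat (m - j) * (c - of_nat m + x))"
      unfolding b2 b3 F p_def f_def by (simp add: algebra_simps add_divide_distrib)
    also have "\<dots> = x * (p / f)" unfolding ks
    proof -
      have gen: "\<And>q f p x :: complex. q \<noteq> 0 \<Longrightarrow> f \<noteq> 0 \<Longrightarrow> p / (q * f) * (q * x) = x * (p / f)"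
        by (simp add: field_simps)
      show "p / ((of_nat m + 1) * f) * ((of_nat m + 1) * x) = x * (p / f)" by (rule gen[OF m1 f0])
    qed
    also have "\<dots> = poly ([:0,1:] * BB m j) x" unfolding b1 p_def f_def by simp
    finally show ?thesis by simp
  qed
  thus ?thesis using poly_eq_poly_eq_iff by blast
qed

theorem theorem3p3:
  fixes P :: "nat \<Rightarrow> complex poly"
  assumes deg: "\<And>n. degree (P n) = n"
    and P0: "P 0 = 1"
  shows "(\<forall>n k. n \<ge> 2 \<and> 1 \<le> k \<and> k \<le> n - 1 \<longrightarrow>
            eulerian_num (bar_seq P) n k =
              (of_nat k + 1) * eulerian_num P (n - 1) k
              + of_nat (n - k) * eulerian_num P (n - 1) (k - 1))
       \<and> (\<forall>n \<ge> 1.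
            eulerian_num (bar_seq P) n 0 = poly (bar_seq P n) 1
          \<and> poly (bar_seq P n) 1 = eulerian_num P (n - 1) 0
          \<and> eulerian_num P (n - 1) 0 = poly (P (n - 1)) 1)"
proof -
  have degbar: "degree (bar_seq P n) \<le> n" for n
  proof (cases n)
    case 0 thus ?thesis by (simp add: bar_seq_def)
  next
    case (Suc m)
    have "degree ([:0,1:] * P m) \<le> degree ([:0,1::complex:]) + degree (P m)"
      by (rule degree_mult_le)
    thus ?thesis using Suc deg[of m] by (simp add: bar_seq_def)
  qed
  have rec: "eulerian_num (bar_seq P) (Suc m) k =
      (of_nat k + 1) * eulerian_num P m k
      + (if k = 0 then 0 else of_nat (Suc m - k) * eulerian_num P m (k - 1))" for m k
  proof -
    define a where "a = eulerian_num P m"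
    have a1: "\<forall>j>m. a j = 0" and a2: "P m = SS m a"
      using eulerian_spec[of P m] deg[of m] by (auto simp: a_def)
    define c where "c = (\<lambda>k. (of_nat k + 1) * a k
      + (if k = 0 then 0 else of_nat (Suc m - k) * a (k - 1)))"
    have c1: "\<forall>j>Suc m. c j = 0" using a1 by (auto simp: c_def)
    have "bar_seq P (Suc m) = [:0,1:] * SS m a" by (simp add: bar_seq_def a2)
    also have "\<dots> = (\<Sum>j\<le>m. [:0,1:] * smult (a j) (BB m j))"
      unfolding SS_def by (rule sum_distrib_left)
    also have "\<dots> = (\<Sum>j\<le>m. smult ((of_nat j + 1) * a j) (BB (Suc m) j)
        + smult (of_nat (m - j) * a j) (BB (Suc m) (Suc j)))"
      by (intro sum.cong refl, subst mult_smult_right, subst x_BB) (simp_all add: smult_add_right mult.commute)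
    also have "\<dots> = (\<Sum>j\<le>m. smult ((of_nat j + 1) * a j) (BB (Suc m) j))
        + (\<Sum>j\<le>m. smult (of_nat (m - j) * a j) (BB (Suc m) (Suc j)))"
      by (rule sum.distrib)
    also have "(\<Sum>j\<le>m. smult ((of_nat j + 1) * a j) (BB (Suc m) j))
        = (\<Sum>j\<le>Suc m. smult ((of_nat j + 1) * a j) (BB (Suc m) j))"
      using a1 by simp
    also have "(\<Sum>j\<le>m. smult (of_nat (m - j) * a j) (BB (Suc m) (Suc j)))
        = (\<Sum>j\<le>Suc m. smult (if j = 0 then 0 else of_nat (Suc m - j) * a (j - 1)) (BB (Suc m) j))"
      by (subst sum.atMost_Suc_shift) simp
    also have "(\<Sum>j\<le>Suc m. smult ((of_nat j + 1) * a j) (BB (Suc m) j)) + \<dots> = SS (Suc m) c"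
      unfolding SS_def c_def by (simp add: sum.distrib[symmetric] smult_add_left)
    finally have "eulerian_num (bar_seq P) (Suc m) = c" by (intro eulerian_eq c1)
    thus ?thesis by (simp add: c_def a_def)
  qed
  show ?thesis
  proof (intro conjI allI impI)
    fix n k :: nat assume h: "2 \<le> n \<and> 1 \<le> k \<and> k \<le> n - 1"
    then obtain m where n: "n = Suc m" by (cases n) auto
    show "eulerian_num (bar_seq P) n k =
              (of_nat k + 1) * eulerian_num P (n - 1) k
              + of_nat (n - k) * eulerian_num P (n - 1) (k - 1)"
      using h unfolding n rec by simp
  next
    fix n :: nat assume "1 \<le> n"
    then obtain m where n: "n = Suc m" by (cases n) auto
    show "eulerian_num (bar_seq P) n 0 = poly (bar_seq P n) 1"
      by (rule eulerian_0[OF degbar])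
    show "poly (bar_seq P n) 1 = eulerian_num P (n - 1) 0"
      using eulerian_0[of P m] deg[of m] n by (simp add: bar_seq_def)
    show "eulerian_num P (n - 1) 0 = poly (P (n - 1)) 1"
      using eulerian_0[of P "n-1"] deg[of "n-1"] by simp
  qed
qed

end
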